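(* Let $N\ge3$ and let $\mathcal{H}$ be an undirected hypergraph on $\{1,\dots,N\}$. Consider any network dynamical system on $\mathcal{H}$ with one-dimensional node states, smooth $F$ and coupling homogeneous in each order. Then the system does not realize the Field cycle: there do not exist distinct $i,j\in\{1,\dots,N\}$ such that $\Delta$, $S_i$, $S_j$ are dynamically invariant, together with two distinct hyperbolic equilibria $\xi_1,\xi_2\in\Delta$, a heteroclinic trajectory from $\xi_1$ to $\xi_2$ contained in $S_i\setminus\Delta$ and a heteroclinic trajectory from $\xi_2$ to $\xi_1$ contained in $S_j\setminus\Delta$.
   Context: An undirected hypergraph on $\{1,\dots,N\}$ is a set $\mathcal E$ of nonempty subsets $A\subseteq\{1,\dots,N\}$ (undirected hyperedges, identified with directed hyperedges $(A,A)$); the order of $A$ is $|A|+1$. A network dynamical system with coupling homogeneous in each order on it is $\dot x_k = F(x_k) + \sum_{A\in\mathcal{E}:\,k\in A} G^{(|A|+1)}(x_k; x_A)$ on $\mathbb{R}^N$, where $x_A$ is the vector of $x_j$, $j\in A$ (including $x_k$), $F$ is smooth, and $G^{(m)}:\mathbb{R}\times\mathbb{R}^{m-1}\to\mathbb{R}$ is smooth, symmetric in its last $m-1$ arguments and depends nontrivially on them. $\Delta=\{x_1=\dots=x_N\}$ and $S_j=\{x: x_l=x_k \text{ for all } k,l\neq j\}$. A heteroclinic trajectory from $\xi$ to $\xi'$ is a solution $x(t)$, $t\in\mathbb R$, with $x(t)\to\xi$ as $t\to-\infty$ and $x(t)\to\xi'$ as $t\to+\infty$; an equilibrium is hyperbolic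 if its Jacobian has no eigenvalue with zero real part. *)

theory Defs
  imports "HOL-Analysis.Analysis"
begin

text \<open>Node set {1..N} is modelled by a finite (linearly ordered) type 'n with CARD('n) = N;
  states are x :: real^'n.\<close>

text \<open>Smoothness (C-infinity) of a real function of finitely many real variables,
  given as g :: (nat => real) => real depending only on the coordinates < k:
  g is continuous and every partial derivative exists everywhere and is again smooth.\<close>
definition depends_only_on :: "nat \<Rightarrow> ((nat \<Rightarrow> real) \<Rightarrow> real) \<Rightarrow> bool" where
  "depends_only_on k g \<longleftrightarrow> (\<forall>z w. (\<forall>l<k. z l = w l) \<longrightarrow> g z = g w)"

coinductive smooth_in :: "nat \<Rightarrow> ((nat \<Rightarrow> real) \<Rightarrow> real) \<Rightarrow> bool" for k :: nat where
  "depends_only_on k g \<Longrightarrow> continuous_on UNIV g \<Longrightarrow>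
   (\<forall>i<k. \<exists>dg. (\<forall>z. ((\<lambda>s. g (z(i := s))) has_real_derivative dg z) (at (z i))) \<and> smooth_in k dg)
   \<Longrightarrow> smooth_in k g"

definition smooth_real_fun :: "(real \<Rightarrow> real) \<Rightarrow> bool" where
  "smooth_real_fun F \<longleftrightarrow> smooth_in 1 (\<lambda>z. F (z 0))"

text \<open>An admissible order-m coupling function G^(m) : R x R^(m-1) -> R, encoded as a function
  of (z 0, z 1, ..., z (m-1)) with z 0 = x_k and z 1..z (m-1) = x_A:
  smooth, symmetric in the last m-1 arguments, depending nontrivially on them.\<close>
definition admissible_coupling :: "nat \<Rightarrow> ((nat \<Rightarrow> real) \<Rightarrow> real) \<Rightarrow> bool" where
  "admissible_coupling m g \<longleftrightarrow>
     smooth_in m g \<and>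
     (\<forall>p z. p permutes {1..<m} \<longrightarrow> g (z \<circ> p) = g z) \<and>
     (\<exists>z w. z 0 = w 0 \<and> g z \<noteq> g w)"

text \<open>Argument (x_k; x_A) of the coupling function for node k and hyperedge A,
  x_A listed in increasing order of the indices (irrelevant by symmetry).\<close>
definition coupling_arg :: "real^'n::{finite,linorder} \<Rightarrow> 'n \<Rightarrow> 'n set \<Rightarrow> nat \<Rightarrow> real" where
  "coupling_arg x k A = (\<lambda>l. if l = 0 then x $ k
      else if l \<le> card A then x $ (sorted_list_of_set A ! (l - 1)) else 0)"

definition network_field ::
  "('n::{finite,linorder}) set set \<Rightarrow> (real \<Rightarrow> real) \<Rightarrow> (nat \<Rightarrow> (nat \<Rightarrow> real) \<Rightarrow> real)
     \<Rightarrow> real^('n::{finite,linorder}) \<Rightarrow> real^('n::{finite,linorder})" where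
  "network_field E F G x =
     (\<chi> k. F (x $ k) + (\<Sum>A\<in>{A\<in>E. k \<in> A}. G (card A + 1) (coupling_arg x k A)))"

definition diag :: "(real^'n) set" where
  "diag = {x. \<forall>k l. x $ k = x $ l}"

definition S_set :: "'n \<Rightarrow> (real^'n) set" where
  "S_set j = {x. \<forall>k l. k \<noteq> j \<and> l \<noteq> j \<longrightarrow> x $ l = x $ k}"

definition dyn_invariant :: "(real^'n \<Rightarrow> real^'n) \<Rightarrow> (real^'n) set \<Rightarrow> bool" where
  "dyn_invariant f X \<longleftrightarrow>
     (\<forall>x J t0. is_interval J \<and> t0 \<in> J \<and>
        (\<forall>t\<in>J. (x has_vector_derivative f (x t)) (at t within J)) \<and> x t0 \<in> X
        \<longrightarrow> (\<forall>t\<in>J. x t \<in> X))"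

definition complexify :: "real^'n^'n \<Rightarrow> complex^'n^'n" where
  "complexify M = (\<chi> i j. complex_of_real (M $ i $ j))"

definition is_eigenvalue :: "complex^'n^'n \<Rightarrow> complex \<Rightarrow> bool" where
  "is_eigenvalue M c \<longleftrightarrow> (\<exists>v. v \<noteq> 0 \<and> M *v v = c *s v)"

definition hyperbolic_equilibrium :: "(real^'n \<Rightarrow> real^'n) \<Rightarrow> real^'n \<Rightarrow> bool" where
  "hyperbolic_equilibrium f \<xi> \<longleftrightarrow> f \<xi> = 0 \<and>
     (\<exists>L. (f has_derivative L) (at \<xi>) \<and>
        (\<forall>c. is_eigenvalue (complexify (matrix L)) c \<longrightarrow> Re c \<noteq> 0))"

definition heteroclinic :: "(real^'n \<Rightarrow> real^'n) \<Rightarrow> real^'n \<Rightarrow> real^'n \<Rightarrow> (real \<Rightarrow> real^'n) \<Rightarrow> bool" where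
  "heteroclinic f \<xi> \<xi>' x \<longleftrightarrow>
     (\<forall>t. (x has_vector_derivative f (x t)) (at t)) \<and>
     (x \<longlongrightarrow> \<xi>) at_bot \<and> (x \<longlongrightarrow> \<xi>') at_top"

definition realizes_field_cycle :: "(real^'n \<Rightarrow> real^'n) \<Rightarrow> bool" where
  "realizes_field_cycle f \<longleftrightarrow>
     (\<exists>i j. i \<noteq> j \<and> dyn_invariant f diag \<and> dyn_invariant f (S_set i) \<and> dyn_invariant f (S_set j) \<and>
       (\<exists>\<xi>1 \<xi>2. \<xi>1 \<in> diag \<and> \<xi>2 \<in> diag \<and> \<xi>1 \<noteq> \<xi>2 \<and>
          hyperbolic_equilibrium f \<xi>1 \<and> hyperbolic_equilibrium f \<xi>2 \<and>
          (\<exists>x. heteroclinic f \<xi>1 \<xi>2 x \<and> (\<forall>t. x t \<in> S_set i - diag)) \<and>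
          (\<exists>y. heteroclinic f \<xi>2 \<xi>1 y \<and> (\<forall>t. y t \<in> S_set j - diag))))"

end

theory Submission
  imports Defs
begin



lemma uniform_limit_add_const:
  fixes f :: "nat \<Rightarrow> real \<Rightarrow> 'a::real_normed_vector"
  assumes "uniform_limit S f l F"
  shows "uniform_limit S (\<lambda>n x. c + f n x) (\<lambda>x. c + l x) F"
  using assms unfolding uniform_limit_iff by (simp add: dist_norm)

lemma ode_exist:
  fixes f :: "'a::banach \<Rightarrow> 'a"
  assumes cont: "continuous_on UNIV f" and r: "r > 0" and K: "K \<ge> 0"
    and lip: "\<And>x y. x \<in> cball p r \<Longrightarrow> y \<in> cball p r \<Longrightarrow> norm (f x - f y) \<le> K * norm (x - y)"
  shows "\<exists>\<delta>>0. \<exists>\<phi>. \<phi> 0 = p \<and> (\<forall>t\<in>{0..\<delta>}. (\<phi> has_vector_derivative f (\<phi> t)) (at t within {0..\<delta>}))"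
proof -
  define M where "M = norm (f p) + K * r + 1"
  have M: "M > 0" using K r by (simp add: M_def add_nonneg_pos)
  define \<delta> where "\<delta> = min (r / M) (1 / (2 * K + 1))"
  have d0: "\<delta> > 0" using M r K by (simp add: \<delta>_def)
  have dM: "\<delta> * M \<le> r" using M by (simp add: \<delta>_def min_def field_simps)
  have dK: "\<delta> * K \<le> 1/2"
  proof -
    have "\<delta> \<le> 1 / (2 * K + 1)" by (simp add: \<delta>_def)
    hence "\<delta> * K \<le> K / (2 * K + 1)" using K by (metis mult_right_mono times_divide_eq_left mult_1)
    also have "\<dots> \<le> 1/2" using K by (simp add: field_simps)
    finally show ?thesis .
  qed
  have fb: "norm (f x) \<le> M" if "x \<in> cball p r" for x
  proof -
    have "norm (f x) \<le> norm (f p) + norm (f x - f p)" by (metis add.commute norm_triangle_sub)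
    also have "\<dots> \<le> norm (f p) + K * norm (x - p)" using lip[OF that] by (simp add: r less_imp_le)
    also have "\<dots> \<le> norm (f p) + K * r" using that K by (simp add: dist_norm norm_minus_commute mult_left_mono)
    finally show ?thesis by (simp add: M_def)
  qed
  define phi :: "nat \<Rightarrow> real \<Rightarrow> 'a" where
    "phi = rec_nat (\<lambda>t. p) (\<lambda>n \<phi> t. p + integral {0..t} (\<lambda>s. f (\<phi> s)))"
  have phi0: "phi 0 = (\<lambda>t. p)" by (simp add: phi_def)
  have phiS: "phi (Suc n) = (\<lambda>t. p + integral {0..t} (\<lambda>s. f (phi n s)))" for n
    by (simp add: phi_def)
  have contf: "continuous_on {0..\<delta>} (\<lambda>s. f (g s))" if "continuous_on {0..\<delta>} g" for g :: "real \<Rightarrow> 'a"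
    by (rule continuous_on_compose2[OF cont that]) auto
  have intcont: "continuous_on {0..\<delta>} (\<lambda>t. p + integral {0..t} h)" if "continuous_on {0..\<delta>} h" for h :: "real \<Rightarrow> 'a"
  proof -
    have "continuous (at t within {0..\<delta>}) (\<lambda>t. integral {0..t} h)" if "t \<in> {0..\<delta>}" for t
      using integral_has_vector_derivative[OF \<open>continuous_on {0..\<delta>} h\<close> that]
      by (rule has_vector_derivative_continuous)
    hence "continuous_on {0..\<delta>} (\<lambda>t. integral {0..t} h)"
      using continuous_on_eq_continuous_within by blast
    thus ?thesis by (intro continuous_intros)
  qed
  have intb: "norm (integral {0..t} h) \<le> B * t"
    if "continuous_on {0..\<delta>} h" "t \<in> {0..\<delta>}" "\<And>s. s \<in> {0..\<delta>} \<Longrightarrow> norm (h s) \<le> B" for h :: "real \<Rightarrow> 'a" and B t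
  proof -
    have "continuous_on {0..t} h" using that(1) continuous_on_subset that(2) by fastforce
    from integral_bound[OF _ this, of B] that show ?thesis by auto
  qed
  have P: "continuous_on {0..\<delta>} (phi n) \<and> (\<forall>t\<in>{0..\<delta>}. phi n t \<in> cball p r)" for n
  proof (induction n)
    case 0 thus ?case using r by (simp add: phi0)
  next
    case (Suc n)
    hence c: "continuous_on {0..\<delta>} (\<lambda>s. f (phi n s))" using contf by blast
    have "phi (Suc n) t \<in> cball p r" if t: "t \<in> {0..\<delta>}" for t
    proof -
      have "norm (integral {0..t} (\<lambda>s. f (phi n s))) \<le> M * t"
        using intb[OF c t, of M] fb Suc by blast
      also have "\<dots> \<le> M * \<delta>" using t M by auto
      finally show ?thesis using dM by (simp add: phiS dist_norm mult.commute)
    qed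
    thus ?case using intcont[OF c] by (simp add: phiS)
  qed
  have D: "\<forall>t\<in>{0..\<delta>}. norm (phi (Suc n) t - phi n t) \<le> r / 2 ^ n" for n
  proof (induction n)
    case 0 thus ?case using P[of 1] by (simp add: phi0 dist_norm norm_minus_commute)
  next
    case (Suc n)
    show ?case
    proof
      fix t assume t: "t \<in> {0..\<delta>}"
      have c1: "continuous_on {0..\<delta>} (\<lambda>s. f (phi (Suc n) s))" and c0: "continuous_on {0..\<delta>} (\<lambda>s. f (phi n s))"
        using contf P by blast+
      have sub: "{0..t} \<subseteq> {0..\<delta>}" using t by auto
      have "phi (Suc (Suc n)) t - phi (Suc n) t = integral {0..t} (\<lambda>s. f (phi (Suc n) s) - f (phi n s))"
        using integral_diff[OF integrable_continuous_real[OF continuous_on_subset[OF c1 sub]]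
            integrable_continuous_real[OF continuous_on_subset[OF c0 sub]]]
        by (simp add: phiS)
      also have "norm \<dots> \<le> (K * (r / 2 ^ n)) * t"
      proof (rule intb[OF _ t])
        show "continuous_on {0..\<delta>} (\<lambda>s. f (phi (Suc n) s) - f (phi n s))" using c0 c1 by (intro continuous_intros)
        fix s assume s: "s \<in> {0..\<delta>}"
        have "norm (f (phi (Suc n) s) - f (phi n s)) \<le> K * norm (phi (Suc n) s - phi n s)"
          using lip P s by blast
        also have "\<dots> \<le> K * (r / 2 ^ n)" using Suc s K by (intro mult_left_mono) auto
        finally show "norm (f (phi (Suc n) s) - f (phi n s)) \<le> K * (r / 2 ^ n)" .
      qed
      also have "\<dots> \<le> (K * (r / 2 ^ n)) * \<delta>" using t K r by (intro mult_left_mono) auto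
      also have "\<dots> = (\<delta> * K) * (r / 2 ^ n)" by simp
      also have "\<dots> \<le> (1/2) * (r / 2 ^ n)" using dK r by (intro mult_right_mono) auto
      finally show "norm (phi (Suc (Suc n)) t - phi (Suc n) t) \<le> r / 2 ^ Suc n" by simp
    qed
  qed
  have sm: "summable (\<lambda>n. r / 2 ^ n)"
  proof -
    have "summable (\<lambda>n. r * (1/2::real) ^ n)" by (intro summable_mult summable_geometric) simp
    moreover have "(\<lambda>n. r * (1/2::real) ^ n) = (\<lambda>n. r / 2 ^ n)" by (rule ext) (simp add: power_one_over)
    ultimately show ?thesis by simp
  qed
  have ul0: "uniform_limit {0..\<delta>} (\<lambda>n t. \<Sum>i<n. phi (Suc i) t - phi i t)
       (\<lambda>t. suminf (\<lambda>i. phi (Suc i) t - phi i t)) sequentially"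
    by (rule Weierstrass_m_test[OF _ sm]) (use D in blast)
  define \<phi> where "\<phi> = (\<lambda>t. p + suminf (\<lambda>i. phi (Suc i) t - phi i t))"
  have ul: "uniform_limit {0..\<delta>} phi \<phi> sequentially"
  proof -
    have tel: "p + (\<Sum>i<n. phi (Suc i) x - phi i x) = phi n x" for n x
      using sum_lessThan_telescope[of "\<lambda>i. phi i x" n] by (simp add: phi0)
    show ?thesis using uniform_limit_add_const[OF ul0, of p] unfolding tel \<phi>_def .
  qed
  have cphi: "continuous_on {0..\<delta>} \<phi>"
    by (rule uniform_limit_theorem[OF _ ul]) (use P in auto)
  have lim: "(\<lambda>n. phi n t) \<longlonglongrightarrow> \<phi> t" if "t \<in> {0..\<delta>}" for t
    using tendsto_uniform_limitI[OF ul that] .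
  have inb: "\<phi> t \<in> cball p r" if "t \<in> {0..\<delta>}" for t
    by (rule Lim_in_closed_set[OF closed_cball _ _ lim[OF that]]) (use P that in auto)
  have eq: "\<phi> t = p + integral {0..t} (\<lambda>s. f (\<phi> s))" if t: "t \<in> {0..\<delta>}" for t
  proof -
    have sub: "{0..t} \<subseteq> {0..\<delta>}" using t by auto
    have ulf: "uniform_limit {0..t} (\<lambda>n s. f (phi n s)) (\<lambda>s. f (\<phi> s)) sequentially"
    proof (rule uniform_limitI)
      fix e :: real assume e: "e > 0"
      have "\<forall>\<^sub>F n in sequentially. \<forall>s\<in>{0..\<delta>}. dist (phi n s) (\<phi> s) < e / (K + 1)"
        using uniform_limitD[OF ul] e K by simp
      thus "\<forall>\<^sub>F n in sequentially. \<forall>s\<in>{0..t}. dist (f (phi n s)) (f (\<phi> s)) < e"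
      proof eventually_elim
        case (elim n)
        show ?case
        proof
          fix s assume s: "s \<in> {0..t}"
          hence s': "s \<in> {0..\<delta>}" using sub by auto
          have "dist (f (phi n s)) (f (\<phi> s)) \<le> K * dist (phi n s) (\<phi> s)"
            using lip[of "phi n s" "\<phi> s"] P inb s' by (simp add: dist_norm)
          also have "\<dots> \<le> K * (e / (K + 1))" using elim s' K by (intro mult_left_mono) (auto intro: less_imp_le)
          also have "\<dots> < e" using K e by (simp add: field_simps)
          finally show "dist (f (phi n s)) (f (\<phi> s)) < e" .
        qed
      qed
    qed
    obtain I J where I: "\<And>n. ((\<lambda>s. f (phi n s)) has_integral I n) {0..t}"
      and J: "((\<lambda>s. f (\<phi> s)) has_integral J) {0..t}" and IJ: "I \<longlonglongrightarrow> J"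
      by (rule uniform_limit_integral[OF ulf]) (use continuous_on_subset[OF contf sub] P in auto)
    have "(\<lambda>n. phi (Suc n) t) \<longlonglongrightarrow> p + J"
    proof -
      have "integral {0..t} (\<lambda>s. f (phi n s)) = I n" for n using I[of n] by (rule integral_unique)
      thus ?thesis using tendsto_add[OF tendsto_const IJ, of p] by (simp add: phiS)
    qed
    moreover have "(\<lambda>n. phi (Suc n) t) \<longlonglongrightarrow> \<phi> t" using LIMSEQ_Suc[OF lim[OF t]] .
    ultimately have "\<phi> t = p + J" using LIMSEQ_unique by blast
    thus ?thesis using J by (simp add: integral_unique)
  qed
  have cf: "continuous_on {0..\<delta>} (\<lambda>s. f (\<phi> s))" using contf cphi by blast
  show ?thesis
  proof (intro exI conjI ballI)
    show "\<delta> > 0" by (rule d0)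
    show "\<phi> 0 = p" using eq[of 0] d0 by simp
    fix t assume t: "t \<in> {0..\<delta>}"
    have der: "((\<lambda>u. p + integral {0..u} (\<lambda>s. f (\<phi> s))) has_vector_derivative f (\<phi> t)) (at t within {0..\<delta>})"
      using integral_has_vector_derivative[OF cf t] by (intro derivative_eq_intros) auto
    show "(\<phi> has_vector_derivative f (\<phi> t)) (at t within {0..\<delta>})"
      by (rule has_vector_derivative_transform[OF t _ der]) (use eq in auto)
  qed
qed




lemma mvt_coord:
  fixes g dg :: "(nat \<Rightarrow> real) \<Rightarrow> real"
  assumes deriv: "\<And>z. ((\<lambda>s. g (z(q:=s))) has_real_derivative dg z) (at (z q))"
  shows "\<exists>\<theta>. \<bar>\<theta> - z q\<bar> \<le> \<bar>w\<bar> \<and> g (z(q := z q + w)) - g z = w * dg (z(q:=\<theta>))"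
proof -
  define h where "h s = g (z(q:=s))" for s
  have hd: "DERIV h s :> dg (z(q:=s))" for s
    using deriv[of "z(q:=s)"] unfolding h_def[abs_def] by simp
  have gz: "g z = h (z q)" by (simp add: h_def)
  have gw: "g (z(q := z q + w)) = h (z q + w)" by (simp add: h_def)
  consider "w = 0" | "w > 0" | "w < 0" by linarith
  thus ?thesis
  proof cases
    case 1 thus ?thesis by (intro exI[of _ "z q"]) simp
  next
    case 2
    from MVT2[of "z q" "z q + w" h "\<lambda>s. dg (z(q:=s))"] 2 hd
    obtain \<theta> where "z q < \<theta>" "\<theta> < z q + w" "h (z q + w) - h (z q) = w * dg (z(q:=\<theta>))" by auto
    thus ?thesis using 2 by (intro exI[of _ \<theta>]) (simp add: gz gw)
  next
    case 3
    from MVT2[of "z q + w" "z q" h "\<lambda>s. dg (z(q:=s))"] 3 hd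
    obtain \<theta> where "z q + w < \<theta>" "\<theta> < z q" "h (z q) - h (z q + w) = (- w) * dg (z(q:=\<theta>))" by auto
    thus ?thesis using 3 unfolding gz gw by (intro exI[of _ \<theta>]) (auto simp: algebra_simps)
  qed
qed

lemma strict1:
  fixes g dg :: "(nat \<Rightarrow> real) \<Rightarrow> real" and \<Psi> :: "'p::topological_space \<Rightarrow> nat \<Rightarrow> real"
    and P :: "'x \<Rightarrow> 'p" and w :: "'x \<Rightarrow> real"
  assumes deriv: "\<And>z. ((\<lambda>s. g (z(q:=s))) has_real_derivative dg z) (at (z q))"
    and cont: "continuous_on UNIV dg" and c\<Psi>: "continuous_on UNIV \<Psi>"
    and P: "(P \<longlongrightarrow> P0) F" and w: "(w \<longlongrightarrow> 0) F" and w0: "eventually (\<lambda>x. w x \<noteq> 0) F"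
  shows "((\<lambda>x. (g ((\<Psi> (P x))(q := \<Psi> (P x) q + w x)) - g (\<Psi> (P x))) / w x) \<longlongrightarrow> dg (\<Psi> P0)) F"
proof -
  define \<theta> where "\<theta> x = (SOME \<theta>. \<bar>\<theta> - \<Psi> (P x) q\<bar> \<le> \<bar>w x\<bar> \<and>
      g ((\<Psi> (P x))(q := \<Psi> (P x) q + w x)) - g (\<Psi> (P x)) = w x * dg ((\<Psi> (P x))(q:=\<theta>)))" for x
  have th: "\<bar>\<theta> x - \<Psi> (P x) q\<bar> \<le> \<bar>w x\<bar> \<and>
      g ((\<Psi> (P x))(q := \<Psi> (P x) q + w x)) - g (\<Psi> (P x)) = w x * dg ((\<Psi> (P x))(q:=\<theta> x))" for x
    unfolding \<theta>_def by (rule someI_ex) (rule mvt_coord[OF deriv])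
  define \<Psi>' where "\<Psi>' = (\<lambda>(a, s). (\<Psi> a)(q := s))"
  have c\<Psi>': "continuous_on UNIV \<Psi>'"
  proof (rule continuous_on_coordinatewise_then_product)
    fix r
    have cr: "continuous_on UNIV (\<lambda>a. \<Psi> a r)" by (rule continuous_on_product_then_coordinatewise[OF c\<Psi>])
    show "continuous_on UNIV (\<lambda>x. \<Psi>' x r)"
    proof (cases "r = q")
      case True thus ?thesis by (simp add: \<Psi>'_def case_prod_unfold continuous_on_snd)
    next
      case False
      have "continuous_on UNIV (\<lambda>x. \<Psi> (fst x) r)"
        by (rule continuous_on_compose2[OF cr continuous_on_fst[OF continuous_on_id]]) auto
      thus ?thesis using False by (simp add: \<Psi>'_def case_prod_unfold)
    qed
  qed
  have cq: "continuous_on UNIV (\<lambda>a. \<Psi> a q)" by (rule continuous_on_product_then_coordinatewise[OF c\<Psi>])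
  have t1: "((\<lambda>x. \<Psi> (P x) q) \<longlongrightarrow> \<Psi> P0 q) F"
    by (rule continuous_on_tendsto_compose[OF cq P]) auto
  have t2: "((\<lambda>x. \<theta> x - \<Psi> (P x) q) \<longlongrightarrow> 0) F"
  proof (rule tendsto_0_le[OF w, of _ 1])
    show "\<forall>\<^sub>F x in F. norm (\<theta> x - \<Psi> (P x) q) \<le> norm (w x) * 1" using th by simp
  qed
  have t3: "(\<theta> \<longlongrightarrow> \<Psi> P0 q) F"
    using tendsto_add[OF t2 t1] by simp
  have t4: "((\<lambda>x. dg (\<Psi>' (P x, \<theta> x))) \<longlongrightarrow> dg (\<Psi>' (P0, \<Psi> P0 q))) F"
    by (rule continuous_on_tendsto_compose[OF continuous_on_compose2[OF cont c\<Psi>']])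
      (auto intro: tendsto_Pair P t3)
  have e: "\<Psi>' (P0, \<Psi> P0 q) = \<Psi> P0" by (simp add: \<Psi>'_def)
  show ?thesis
  proof (rule Lim_transform_eventually[OF t4[unfolded e]])
    show "\<forall>\<^sub>F x in F. dg (\<Psi>' (P x, \<theta> x)) =
        (g ((\<Psi> (P x))(q := \<Psi> (P x) q + w x)) - g (\<Psi> (P x))) / w x"
      using w0 by eventually_elim (use th in \<open>simp add: \<Psi>'_def\<close>)
  qed
qed

lemma strict1c:
  fixes g dg :: "(nat \<Rightarrow> real) \<Rightarrow> real" and \<Psi> :: "'p::topological_space \<Rightarrow> nat \<Rightarrow> real"
    and P :: "'x \<Rightarrow> 'p" and w :: "'x \<Rightarrow> real"
  assumes deriv: "\<And>z. ((\<lambda>s. g (z(q:=s))) has_real_derivative dg z) (at (z q))"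
    and cont: "continuous_on UNIV dg" and c\<Psi>: "continuous_on UNIV \<Psi>"
    and P: "(P \<longlongrightarrow> P0) F" and w: "(w \<longlongrightarrow> 0) F" and w0: "eventually (\<lambda>x. w x \<noteq> 0) F"
  shows "((\<lambda>x. (g ((\<Psi> (P x))(q := \<Psi> (P x) q + c * w x)) - g (\<Psi> (P x))) / w x) \<longlongrightarrow> c * dg (\<Psi> P0)) F"
proof (cases "c = 0")
  case True thus ?thesis by simp
next
  case False
  have w': "((\<lambda>x. c * w x) \<longlongrightarrow> 0) F" using tendsto_mult[OF tendsto_const w, of c] by simp
  have w0': "eventually (\<lambda>x. c * w x \<noteq> 0) F" using w0 False by (auto elim: eventually_mono)
  have "((\<lambda>x. c * ((g ((\<Psi> (P x))(q := \<Psi> (P x) q + c * w x)) - g (\<Psi> (P x))) / (c * w x))) \<longlongrightarrow> c * dg (\<Psi> P0)) F"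
    by (intro tendsto_mult tendsto_const strict1[OF deriv cont c\<Psi> P w' w0'])
  thus ?thesis using False by simp
qed

lemma strict_dir:
  fixes g :: "(nat \<Rightarrow> real) \<Rightarrow> real" and dg :: "nat \<Rightarrow> (nat \<Rightarrow> real) \<Rightarrow> real"
    and B :: "'p::topological_space \<Rightarrow> nat \<Rightarrow> real"
    and P :: "'x \<Rightarrow> 'p" and w :: "'x \<Rightarrow> real" and d :: "nat \<Rightarrow> real"
  assumes S: "finite S"
    and deriv: "\<And>q z. q \<in> S \<Longrightarrow> ((\<lambda>s. g (z(q:=s))) has_real_derivative dg q z) (at (z q))"
    and cont: "\<And>q. q \<in> S \<Longrightarrow> continuous_on UNIV (dg q)" and cB: "continuous_on UNIV B"
    and P: "(P \<longlongrightarrow> P0) F" and w: "(w \<longlongrightarrow> 0) F" and w0: "eventually (\<lambda>x. w x \<noteq> 0) F"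
  shows "((\<lambda>x. (g (\<lambda>r. B (P x) r + w x * (if r \<in> S then d r else 0)) - g (B (P x))) / w x)
           \<longlongrightarrow> (\<Sum>q\<in>S. d q * dg q (B P0))) F"
  using S deriv cont
proof (induction S rule: finite_induct)
  case empty thus ?case by simp
next
  case (insert q S)
  define \<Psi> where "\<Psi> = (\<lambda>(a, u) r. B a r + u * (if r \<in> S then d r else 0))"
  have c\<Psi>: "continuous_on UNIV \<Psi>"
  proof (rule continuous_on_coordinatewise_then_product)
    fix r
    have cr: "continuous_on UNIV (\<lambda>a. B a r)" by (rule continuous_on_product_then_coordinatewise[OF cB])
    have "continuous_on UNIV (\<lambda>x. B (fst x) r)"
      by (rule continuous_on_compose2[OF cr continuous_on_fst[OF continuous_on_id]]) auto
    thus "continuous_on UNIV (\<lambda>x. \<Psi> x r)"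
      by (simp add: \<Psi>_def case_prod_unfold) (auto intro!: continuous_intros)
  qed
  have Q: "((\<lambda>x. (P x, w x)) \<longlongrightarrow> (P0, 0)) F" by (intro tendsto_Pair P w)
  have A1: "((\<lambda>x. (g ((\<Psi> (P x, w x))(q := \<Psi> (P x, w x) q + d q * w x)) - g (\<Psi> (P x, w x))) / w x)
      \<longlongrightarrow> d q * dg q (\<Psi> (P0, 0))) F"
    by (rule strict1c[OF insert.prems(1)[OF insertI1] insert.prems(2)[OF insertI1] c\<Psi> Q w w0])
  have A2: "((\<lambda>x. (g (\<lambda>r. B (P x) r + w x * (if r \<in> S then d r else 0)) - g (B (P x))) / w x)
           \<longlongrightarrow> (\<Sum>q\<in>S. d q * dg q (B P0))) F"
    using insert.IH insert.prems by blast
  have e1: "\<Psi> (P0, 0) = B P0" by (simp add: \<Psi>_def)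
  have e2: "(\<lambda>r. B (P x) r + w x * (if r \<in> insert q S then d r else 0)) =
      (\<Psi> (P x, w x))(q := \<Psi> (P x, w x) q + d q * w x)" for x
    using insert.hyps(2) by (auto simp: \<Psi>_def fun_eq_iff)
  have e3: "\<Psi> (P x, w x) = (\<lambda>r. B (P x) r + w x * (if r \<in> S then d r else 0))" for x
    by (simp add: \<Psi>_def)
  have "((\<lambda>x. (g ((\<Psi> (P x, w x))(q := \<Psi> (P x, w x) q + d q * w x)) - g (\<Psi> (P x, w x))) / w x
      + (g (\<lambda>r. B (P x) r + w x * (if r \<in> S then d r else 0)) - g (B (P x))) / w x)
      \<longlongrightarrow> d q * dg q (B P0) + (\<Sum>q\<in>S. d q * dg q (B P0))) F"
    using tendsto_add[OF A1 A2] unfolding e1 .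
  thus ?case using insert.hyps unfolding e2 e3 by (simp add: diff_divide_distrib)
qed




definition ca_dir :: "'n::{finite,linorder} \<Rightarrow> 'n \<Rightarrow> 'n set \<Rightarrow> nat \<Rightarrow> real" where
  "ca_dir k q A r = (if r = 0 then (if k = q then 1 else 0)
      else (if sorted_list_of_set A ! (r - 1) = q then 1 else 0))"

lemma coupling_arg_shift:
  "coupling_arg (X + w *\<^sub>R axis q 1) k A =
     (\<lambda>r. coupling_arg X k A r + w * (if r \<in> {..card A} then ca_dir k q A r else 0))"
  by (auto simp: fun_eq_iff coupling_arg_def ca_dir_def axis_def)

lemma coupling_arg_cont: "continuous_on UNIV (\<lambda>X. coupling_arg X k A)"
proof (rule continuous_on_coordinatewise_then_product)
  fix r
  show "continuous_on UNIV (\<lambda>X. coupling_arg X k A r)"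
    unfolding coupling_arg_def by (cases "r = 0"; cases "r \<le> card A") (auto intro!: continuous_intros)
qed

lemma nf_comp:
  "network_field E F G X $ k = F (X $ k) + (\<Sum>A\<in>{A\<in>E. k \<in> A}. G (card A + 1) (coupling_arg X k A))"
  by (simp add: network_field_def)

definition Dn where
  "Dn E dF dG k q X0 = (if k = q then dF (\<lambda>r::nat. X0 $ k) else 0) +
     (\<Sum>A\<in>{A\<in>E. k \<in> A}. \<Sum>r\<in>{..card A}. ca_dir k q A r * dG A r (coupling_arg X0 k A))"

lemma strict_f:
  fixes E :: "('n::{finite,linorder}) set set" and X :: "'x \<Rightarrow> real^('n::{finite,linorder})"
  assumes hF: "\<And>z. ((\<lambda>s. F ((z(0:=s)) 0)) has_real_derivative dF z) (at (z 0))"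
    and cF: "continuous_on UNIV dF"
    and hG: "\<And>A r z. A \<in> E \<Longrightarrow> r \<le> card A \<Longrightarrow>
        ((\<lambda>s. G (card A + 1) (z(r:=s))) has_real_derivative dG A r z) (at (z r))"
    and cG: "\<And>A r. A \<in> E \<Longrightarrow> r \<le> card A \<Longrightarrow> continuous_on UNIV (dG A r)"
    and X: "(X \<longlongrightarrow> X0) Fl" and w: "(w \<longlongrightarrow> 0) Fl" and w0: "eventually (\<lambda>x. w x \<noteq> 0) Fl"
  shows "((\<lambda>x. (network_field E F G (X x + w x *\<^sub>R axis q 1) $ k - network_field E F G (X x) $ k) / w x)
           \<longlongrightarrow> Dn E dF dG k q X0) Fl"
proof -
  define c :: real where "c = (if k = q then 1 else 0)"
  have cB: "continuous_on UNIV (\<lambda>Y (r::nat). (Y::real^('n::{finite,linorder})) $ k)"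
    by (auto intro!: continuous_on_coordinatewise_then_product continuous_intros)
  have T1: "((\<lambda>x. (F (X x $ k + w x * c) - F (X x $ k)) / w x) \<longlongrightarrow> c * dF (\<lambda>r. X0 $ k)) Fl"
    using strict_dir[where S="{0}" and g="\<lambda>z. F (z 0)" and dg="\<lambda>_. dF" and B="\<lambda>Y r. Y $ k" and d="\<lambda>_. c",
        OF _ _ _ cB X w w0] hF cF by simp
  have T2: "((\<lambda>x. (G (card A + 1) (\<lambda>r. coupling_arg (X x) k A r + w x * (if r \<in> {..card A} then ca_dir k q A r else 0))
       - G (card A + 1) (coupling_arg (X x) k A)) / w x)
     \<longlongrightarrow> (\<Sum>r\<in>{..card A}. ca_dir k q A r * dG A r (coupling_arg X0 k A))) Fl" if A: "A \<in> E" for A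
    by (rule strict_dir[OF _ _ _ coupling_arg_cont X w w0]) (auto intro!: hG[simplified] cG A simp del: fun_upd_apply)
  have "((\<lambda>x. (F (X x $ k + w x * c) - F (X x $ k)) / w x
     + (\<Sum>A\<in>{A\<in>E. k \<in> A}. (G (card A + 1) (coupling_arg (X x + w x *\<^sub>R axis q 1) k A)
       - G (card A + 1) (coupling_arg (X x) k A)) / w x))
     \<longlongrightarrow> c * dF (\<lambda>r. X0 $ k) + (\<Sum>A\<in>{A\<in>E. k \<in> A}. \<Sum>r\<in>{..card A}. ca_dir k q A r * dG A r (coupling_arg X0 k A))) Fl"
    using T1 T2 unfolding coupling_arg_shift by (intro tendsto_add tendsto_sum) auto
  moreover have "(F (X x $ k + w x * c) - F (X x $ k)) / w x
     + (\<Sum>A\<in>{A\<in>E. k \<in> A}. (G (card A + 1) (coupling_arg (X x + w x *\<^sub>R axis q 1) k A)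
       - G (card A + 1) (coupling_arg (X x) k A)) / w x) =
     (network_field E F G (X x + w x *\<^sub>R axis q 1) $ k - network_field E F G (X x) $ k) / w x" for x
  proof -
    have aux: "(a - c') / w' + (b - d') / w' = (a + b - (c' + d')) / w'" for a b c' d' w' :: real
      by (simp add: diff_divide_distrib add_divide_distrib)
    show ?thesis
      by (simp add: nf_comp c_def axis_def sum_divide_distrib[symmetric] sum_subtractf aux del: of_nat_Suc)
  qed
  ultimately show ?thesis by (cases "k = q") (simp_all add: Dn_def c_def)
qed




lemma quot_bound:
  fixes E :: "('n::{finite,linorder}) set set" and dF :: "(nat \<Rightarrow> real) \<Rightarrow> real"
  assumes hF: "\<And>z. ((\<lambda>s. F ((z(0:=s)) 0)) has_real_derivative dF z) (at (z 0))"
    and cF: "continuous_on UNIV dF"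
    and hG: "\<And>A r z. A \<in> E \<Longrightarrow> r \<le> card A \<Longrightarrow>
        ((\<lambda>s. G (card A + 1) (z(r:=s))) has_real_derivative dG A r z) (at (z r))"
    and cG: "\<And>A r. A \<in> E \<Longrightarrow> r \<le> card A \<Longrightarrow> continuous_on UNIV (dG A r)"
  shows "\<exists>d>0. \<exists>C\<ge>0. \<forall>(X::real^('n::{finite,linorder})) w k q. dist X X0 < d \<longrightarrow> \<bar>w\<bar> < d \<longrightarrow>
     \<bar>network_field E F G (X + w *\<^sub>R axis q 1) $ k - network_field E F G X $ k\<bar> \<le> C * \<bar>w\<bar>"
proof -
  define Fl where "Fl = at (X0, 0::real) within (UNIV \<times> (UNIV - {0}))"
  define Q where "Q k q x = (network_field E F G (fst x + snd x *\<^sub>R axis q 1) $ k - network_field E F G (fst x) $ k) / snd x"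
    for k q and x :: "(real^('n::{finite,linorder})) \<times> real"
  have X: "(fst \<longlongrightarrow> X0) Fl" unfolding Fl_def using tendsto_fst[OF tendsto_ident_at, of "(X0, 0::real)"] by simp
  have w: "(snd \<longlongrightarrow> 0) Fl" unfolding Fl_def using tendsto_snd[OF tendsto_ident_at, of "(X0, 0::real)"] by simp
  have w0: "eventually (\<lambda>x. snd x \<noteq> 0) Fl" unfolding Fl_def eventually_at_filter by (auto intro: always_eventually)
  have lim: "(Q k q \<longlongrightarrow> Dn E dF dG k q X0) Fl" for k q
    unfolding Q_def by (rule strict_f[where F=F and dF=dF and G=G and dG=dG and E=E, OF hF cF hG cG X w w0])
  define C where "C = (\<Sum>k\<in>UNIV. \<Sum>q\<in>UNIV. \<bar>Dn E dF dG k q X0\<bar> + 1)"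
  have Cge: "\<bar>Dn E dF dG k q X0\<bar> + 1 \<le> C" for k q
  proof -
    have "\<bar>Dn E dF dG k q X0\<bar> + 1 \<le> (\<Sum>q\<in>UNIV. \<bar>Dn E dF dG k q X0\<bar> + 1)"
      by (rule member_le_sum) auto
    also have "\<dots> \<le> C" unfolding C_def
      by (rule member_le_sum[of k UNIV "\<lambda>k. \<Sum>q\<in>UNIV. \<bar>Dn E dF dG k q X0\<bar> + 1"]) (auto intro: sum_nonneg)
    finally show ?thesis .
  qed
  have C0: "C \<ge> 0" using Cge[of undefined undefined] by linarith
  have ev1: "eventually (\<lambda>x. \<bar>Q k q x\<bar> \<le> C) Fl" for k q
  proof -
    have "eventually (\<lambda>x. dist (Q k q x) (Dn E dF dG k q X0) < 1) Fl" using tendstoD[OF lim] by simp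
    thus ?thesis
    proof eventually_elim
      case (elim x) thus ?case using Cge[of k q] by (simp add: dist_real_def)
    qed
  qed
  have "eventually (\<lambda>x. \<forall>k. \<forall>q. \<bar>Q k q x\<bar> \<le> C) Fl"
    by (intro eventually_all_finite ev1)
  hence "\<exists>d>0. \<forall>x\<in>UNIV \<times> (UNIV - {0}). x \<noteq> (X0, 0) \<and> dist x (X0, 0) < d \<longrightarrow> (\<forall>k q. \<bar>Q k q x\<bar> \<le> C)"
    unfolding Fl_def by (rule eventually_at[THEN iffD1])
  then obtain d where d: "d > 0" and dP: "\<And>x. x \<in> UNIV \<times> (UNIV - {0}) \<Longrightarrow> x \<noteq> (X0, 0) \<Longrightarrow> dist x (X0, 0) < d \<Longrightarrow>
      \<forall>k q. \<bar>Q k q x\<bar> \<le> C"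
    by blast
  have main: "\<bar>network_field E F G (X + w *\<^sub>R axis q 1) $ k - network_field E F G X $ k\<bar> \<le> C * \<bar>w\<bar>"
    if a: "dist X X0 < d/2" "\<bar>w\<bar> < d/2" for X :: "real^('n::{finite,linorder})" and w k q
    proof (cases "w = 0")
      case True thus ?thesis by simp
    next
      case False
      have "dist (X, w) (X0, 0) \<le> dist X X0 + \<bar>w\<bar>"
        unfolding dist_Pair_Pair by (rule order_trans[OF sqrt_sum_squares_le_sum]) auto
      hence "\<bar>Q k q (X, w)\<bar> \<le> C" using dP[of "(X, w)"] a False by auto
      hence "\<bar>network_field E F G (X + w *\<^sub>R axis q 1) $ k - network_field E F G X $ k\<bar> / \<bar>w\<bar> \<le> C"
        by (simp add: Q_def abs_divide)
      thus ?thesis using False by (simp add: divide_le_eq mult.commute)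
    qed
  show ?thesis using d C0 main by (intro exI[of _ "d/2"] exI[of _ C]) auto
qed

lemma lip_from_bound:
  fixes f :: "real^'n \<Rightarrow> real^'n"
  assumes d: "d > 0" and C: "C \<ge> 0"
    and bnd: "\<forall>X w k q. dist X X0 < d \<longrightarrow> \<bar>w\<bar> < d \<longrightarrow> \<bar>f (X + w *\<^sub>R axis q 1) $ k - f X $ k\<bar> \<le> C * \<bar>w\<bar>"
  shows "\<exists>\<rho>>0. \<forall>X\<in>cball X0 \<rho>. \<forall>Y\<in>cball X0 \<rho>. norm (f X - f Y) \<le> (real CARD('n) * real CARD('n) * C) * norm (X - Y)"
proof -
  define N where "N = real CARD('n)"
  have N: "N \<ge> 1" by (simp add: N_def)
  define \<rho> where "\<rho> = d / (8 * N)"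
  have \<rho>: "\<rho> > 0" using d N by (simp add: \<rho>_def)
  have \<rho>N: "2 * N * \<rho> < d" using d N by (simp add: \<rho>_def field_simps)
  have main: "norm (f X - f Y) \<le> (N * N * C) * norm (X - Y)" if X: "X \<in> cball X0 \<rho>" and Y: "Y \<in> cball X0 \<rho>" for X Y
  proof -
    define Z where "Z S = (\<chi> r. if r \<in> S then Y $ r else X $ r)" for S
    have cX: "\<bar>(X - X0) $ r\<bar> \<le> \<rho>" for r
      using component_le_norm_cart[of "X - X0" r] X by (simp add: dist_norm norm_minus_commute)
    have cY: "\<bar>(Y - X0) $ r\<bar> \<le> \<rho>" for r
      using component_le_norm_cart[of "Y - X0" r] Y by (simp add: dist_norm norm_minus_commute)
    have Zin: "dist (Z S) X0 < d" for S
    proof -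
      have "norm (Z S - X0) \<le> (\<Sum>r\<in>UNIV. \<bar>(Z S - X0) $ r\<bar>)" by (rule norm_le_l1_cart)
      also have "\<dots> \<le> (\<Sum>r\<in>(UNIV::'n set). 2 * \<rho>)"
      proof (rule sum_mono)
        fix r show "\<bar>(Z S - X0) $ r\<bar> \<le> 2 * \<rho>"
          using cX[of r] cY[of r] \<rho> by (cases "r \<in> S") (simp_all add: Z_def)
      qed
      also have "\<dots> = 2 * N * \<rho>" by (simp add: N_def)
      finally show ?thesis using \<rho>N by (simp add: dist_norm)
    qed
    have YX: "\<bar>Y $ q - X $ q\<bar> < d" for q
    proof -
      have "\<bar>Y $ q - X $ q\<bar> \<le> \<bar>(Y - X0) $ q\<bar> + \<bar>(X - X0) $ q\<bar>" by simp
      also have "\<dots> \<le> 2 * \<rho>" using cX[of q] cY[of q] by simp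
      also have "\<dots> \<le> 2 * N * \<rho>" using N \<rho> by simp
      also have "\<dots> < d" by (rule \<rho>N)
      finally show ?thesis .
    qed
    have ind: "\<forall>k. \<bar>f (Z S) $ k - f X $ k\<bar> \<le> C * (\<Sum>q\<in>S. \<bar>Y $ q - X $ q\<bar>)" if "finite S" for S
      using that
    proof (induction S rule: finite_induct)
      case empty
      have "Z {} = X" by (simp add: Z_def vec_eq_iff)
      thus ?case by simp
    next
      case (insert q S)
      have e: "Z (insert q S) = Z S + (Y $ q - X $ q) *\<^sub>R axis q 1"
        using insert.hyps(2) by (auto simp: Z_def vec_eq_iff axis_def)
      show ?case
      proof
        fix k
        have "\<bar>f (Z (insert q S)) $ k - f X $ k\<bar> \<le> \<bar>f (Z S + (Y $ q - X $ q) *\<^sub>R axis q 1) $ k - f (Z S) $ k\<bar> + \<bar>f (Z S) $ k - f X $ k\<bar>"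
          unfolding e by linarith
        also have "\<dots> \<le> C * \<bar>Y $ q - X $ q\<bar> + C * (\<Sum>q\<in>S. \<bar>Y $ q - X $ q\<bar>)"
        proof (rule add_mono)
          show "\<bar>f (Z S + (Y $ q - X $ q) *\<^sub>R axis q 1) $ k - f (Z S) $ k\<bar> \<le> C * \<bar>Y $ q - X $ q\<bar>"
            using bnd Zin[of S] YX[of q] by blast
          show "\<bar>f (Z S) $ k - f X $ k\<bar> \<le> C * (\<Sum>q\<in>S. \<bar>Y $ q - X $ q\<bar>)" using insert.IH by blast
        qed
        finally show "\<bar>f (Z (insert q S)) $ k - f X $ k\<bar> \<le> C * (\<Sum>q\<in>insert q S. \<bar>Y $ q - X $ q\<bar>)"
          using insert.hyps by (simp add: distrib_left)
      qed
    qed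
    have ZU: "Z UNIV = Y" by (simp add: Z_def vec_eq_iff)
    have comp: "\<bar>(f X - f Y) $ k\<bar> \<le> N * C * norm (X - Y)" for k
    proof -
      have "\<bar>(f X - f Y) $ k\<bar> = \<bar>f Y $ k - f X $ k\<bar>" by simp
      also have "\<dots> \<le> C * (\<Sum>q\<in>UNIV. \<bar>Y $ q - X $ q\<bar>)" using ind[of UNIV] ZU by simp
      also have "\<dots> \<le> C * (\<Sum>q\<in>(UNIV::'n set). norm (X - Y))"
      proof (intro mult_left_mono[OF sum_mono C])
        fix q show "\<bar>Y $ q - X $ q\<bar> \<le> norm (X - Y)"
          using component_le_norm_cart[of "X - Y" q] by simp
      qed
      also have "\<dots> = N * C * norm (X - Y)" by (simp add: N_def)
      finally show ?thesis .
    qed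
    have "norm (f X - f Y) \<le> (\<Sum>k\<in>UNIV. \<bar>(f X - f Y) $ k\<bar>)" by (rule norm_le_l1_cart)
    also have "\<dots> \<le> (\<Sum>k\<in>(UNIV::'n set). N * C * norm (X - Y))" by (rule sum_mono) (rule comp)
    also have "\<dots> = (N * N * C) * norm (X - Y)" by (simp add: N_def)
    finally show ?thesis .
  qed
  show ?thesis using \<rho> main unfolding N_def by blast
qed




lemma sm_cont: "smooth_in k g \<Longrightarrow> continuous_on UNIV g"
  by (erule smooth_in.cases) simp

lemma sm_der: "smooth_in k g \<Longrightarrow> i < k \<Longrightarrow>
   \<exists>dg. (\<forall>z. ((\<lambda>s. g (z(i := s))) has_real_derivative dg z) (at (z i))) \<and> continuous_on UNIV dg"
  by (erule smooth_in.cases) (blast dest: sm_cont)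

lemma get_derivs:
  fixes E :: "('n::{finite,linorder}) set set" and F :: "real \<Rightarrow> real"
  assumes "smooth_real_fun F" "\<forall>A\<in>E. admissible_coupling (card A + 1) (G (card A + 1))"
  shows "\<exists>dF dG. (\<forall>z::nat\<Rightarrow>real. ((\<lambda>s. F ((z(0:=s)) 0)) has_real_derivative dF z) (at (z 0))) \<and> continuous_on UNIV dF \<and>
    (\<forall>A r z. A \<in> E \<longrightarrow> r \<le> card A \<longrightarrow> ((\<lambda>s. G (card A + 1) (z(r:=s))) has_real_derivative dG A r z) (at (z r))) \<and>
    (\<forall>A r. A \<in> E \<longrightarrow> r \<le> card A \<longrightarrow> continuous_on UNIV (dG A r))"
proof -
  obtain dF where dF: "\<forall>z::nat\<Rightarrow>real. ((\<lambda>s. F ((z(0:=s)) 0)) has_real_derivative dF z) (at (z 0))" "continuous_on UNIV dF"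
    using sm_der[of 1 "\<lambda>z. F (z 0)" 0] assms(1) unfolding smooth_real_fun_def by auto
  have "\<forall>A r. \<exists>dg. A \<in> E \<longrightarrow> r \<le> card A \<longrightarrow>
     (\<forall>z. ((\<lambda>s. G (card A + 1) (z(r:=s))) has_real_derivative dg z) (at (z r))) \<and> continuous_on UNIV dg"
  proof (intro allI)
    fix A r
    show "\<exists>dg. A \<in> E \<longrightarrow> r \<le> card A \<longrightarrow>
     (\<forall>z. ((\<lambda>s. G (card A + 1) (z(r:=s))) has_real_derivative dg z) (at (z r))) \<and> continuous_on UNIV dg"
    proof (cases "A \<in> E \<and> r \<le> card A")
      case True
      hence "smooth_in (card A + 1) (G (card A + 1))" using assms(2) by (auto simp: admissible_coupling_def)
      from sm_der[OF this, of r] True show ?thesis by auto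
    qed auto
  qed
  then obtain dG where "\<forall>A r. A \<in> E \<longrightarrow> r \<le> card A \<longrightarrow>
     (\<forall>z. ((\<lambda>s. G (card A + 1) (z(r:=s))) has_real_derivative dG A r z) (at (z r))) \<and> continuous_on UNIV (dG A r)"
    by metis
  thus ?thesis using dF by blast
qed

lemma f_lip:
  fixes E :: "('n::{finite,linorder}) set set"
  assumes "smooth_real_fun F" "\<forall>A\<in>E. admissible_coupling (card A + 1) (G (card A + 1))"
  shows "\<exists>\<rho>>0. \<exists>K\<ge>0. \<forall>X\<in>cball X0 \<rho>. \<forall>Y\<in>cball X0 \<rho>.
     norm (network_field E F G X - network_field E F G Y) \<le> K * norm (X - Y)"
proof -
  obtain dF dG where hF: "\<And>z::nat\<Rightarrow>real. ((\<lambda>s. F ((z(0:=s)) 0)) has_real_derivative dF z) (at (z 0))"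
    and cF: "continuous_on UNIV dF"
    and hG: "\<And>A r z. A \<in> E \<Longrightarrow> r \<le> card A \<Longrightarrow> ((\<lambda>s. G (card A + 1) (z(r:=s))) has_real_derivative dG A r z) (at (z r))"
    and cG: "\<And>A r. A \<in> E \<Longrightarrow> r \<le> card A \<Longrightarrow> continuous_on UNIV (dG A r)"
    using get_derivs[OF assms] by blast
  obtain d C where d: "d > 0" "C \<ge> 0" and b: "\<forall>(X::real^('n::{finite,linorder})) w k q. dist X X0 < d \<longrightarrow> \<bar>w\<bar> < d \<longrightarrow>
     \<bar>network_field E F G (X + w *\<^sub>R axis q 1) $ k - network_field E F G X $ k\<bar> \<le> C * \<bar>w\<bar>"
    using quot_bound[where F=F and G=G and E=E and dF=dF and dG=dG, OF hF cF hG cG, of X0] by blast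
  from lip_from_bound[OF d b] obtain \<rho> where "\<rho> > 0" and
    "\<forall>X\<in>cball X0 \<rho>. \<forall>Y\<in>cball X0 \<rho>. norm (network_field E F G X - network_field E F G Y)
        \<le> (real CARD('n) * real CARD('n) * C) * norm (X - Y)" by blast
  moreover have "real CARD('n) * real CARD('n) * C \<ge> 0" using d by simp
  ultimately show ?thesis by blast
qed

lemma cont_from_lip:
  fixes f :: "'a::real_normed_vector \<Rightarrow> 'b::real_normed_vector"
  assumes "\<And>X0. \<exists>\<rho>>0. \<exists>K\<ge>0. \<forall>X\<in>cball X0 \<rho>. \<forall>Y\<in>cball X0 \<rho>. norm (f X - f Y) \<le> K * norm (X - Y)"
  shows "continuous_on UNIV f"
proof -
  have "isCont f X0" for X0
  proof -
    obtain \<rho> K where \<rho>: "\<rho> > 0" "K \<ge> 0" and L: "\<forall>X\<in>cball X0 \<rho>. \<forall>Y\<in>cball X0 \<rho>. norm (f X - f Y) \<le> K * norm (X - Y)"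
      using assms by blast
    have ev: "eventually (\<lambda>X. X \<in> cball X0 \<rho>) (at X0)"
      using \<rho> by (auto simp: eventually_at dist_commute intro!: exI[of _ \<rho>])
    have "((\<lambda>X. f X - f X0) \<longlongrightarrow> 0) (at X0)"
    proof (rule tendsto_0_le[where f="\<lambda>X. X - X0" and K=K])
      show "((\<lambda>X. X - X0) \<longlongrightarrow> 0) (at X0)" by (intro tendsto_eq_intros) auto
      show "eventually (\<lambda>X. norm (f X - f X0) \<le> norm (X - X0) * K) (at X0)"
        using ev by eventually_elim (use L \<rho> in \<open>auto simp: mult.commute\<close>)
    qed
    thus ?thesis unfolding isCont_def by (simp add: LIM_zero_cancel)
  qed
  thus ?thesis by (simp add: continuous_at_imp_continuous_on)
qed

lemma tangent:
  fixes f :: "real^'n \<Rightarrow> real^'n"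
  assumes inv: "dyn_invariant f {x. \<forall>(k,l)\<in>R. x $ k = x $ l}"
    and cont: "continuous_on UNIV f" and r: "r > 0" and K: "K \<ge> 0"
    and lip: "\<forall>X\<in>cball p r. \<forall>Y\<in>cball p r. norm (f X - f Y) \<le> K * norm (X - Y)"
    and p: "\<forall>(k,l)\<in>R. p $ k = p $ l" and kl: "(k, l) \<in> R"
  shows "f p $ k = f p $ l"
proof -
  obtain \<delta> \<phi> where \<delta>: "\<delta> > 0" and \<phi>0: "\<phi> 0 = p"
    and der: "\<forall>t\<in>{0..\<delta>}. (\<phi> has_vector_derivative f (\<phi> t)) (at t within {0..\<delta>})"
    using ode_exist[where p=p, OF cont r K] lip by blast
  have inX: "\<forall>t\<in>{0..\<delta>}. \<phi> t \<in> {x. \<forall>(k,l)\<in>R. x $ k = x $ l}"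
    using inv unfolding dyn_invariant_def
    by (elim allE[of _ \<phi>] allE[of _ "{0..\<delta>}"] allE[of _ 0]) (use \<delta> der \<phi>0 p is_interval_cc in auto)
  have "((\<lambda>t. \<phi> t $ k - \<phi> t $ l) has_vector_derivative (f (\<phi> 0) $ k - f (\<phi> 0) $ l)) (at 0 within {0..\<delta>})"
    using der \<delta> by (intro has_vector_derivative_diff bounded_linear.has_vector_derivative[OF bounded_linear_vec_nth]) auto
  hence "((\<lambda>t. \<phi> t $ k - \<phi> t $ l) has_field_derivative (f p $ k - f p $ l)) (at 0 within {0..\<delta>})"
    by (simp add: has_real_derivative_iff_has_vector_derivative \<phi>0)
  hence lim: "((\<lambda>y. ((\<phi> y $ k - \<phi> y $ l) - (\<phi> 0 $ k - \<phi> 0 $ l)) / (y - 0)) \<longlongrightarrow> f p $ k - f p $ l) (at_right 0)"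
    unfolding has_field_derivative_iff at_within_Icc_at_right[OF \<delta>] .
  have "eventually (\<lambda>y. ((\<phi> y $ k - \<phi> y $ l) - (\<phi> 0 $ k - \<phi> 0 $ l)) / (y - 0) = 0) (at_right 0)"
  proof -
    have h: "\<And>t. t \<in> {0..\<delta>} \<Longrightarrow> \<phi> t $ k = \<phi> t $ l" using inX kl by blast
    have "eventually (\<lambda>y. y \<in> {0..\<delta>}) (at_right (0::real))"
      using \<delta> unfolding eventually_at_right_field by (intro exI[of _ \<delta>]) auto
    thus ?thesis by eventually_elim (use h \<delta> in auto)
  qed
  hence "((\<lambda>y. ((\<phi> y $ k - \<phi> y $ l) - (\<phi> 0 $ k - \<phi> 0 $ l)) / (y - 0)) \<longlongrightarrow> 0) (at_right 0)"
    by (rule tendsto_eventually)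
  from tendsto_unique[OF _ lim this] show ?thesis by simp
qed




definition Kc :: "nat \<Rightarrow> real \<Rightarrow> real \<Rightarrow> nat \<Rightarrow> real" where
  "Kc n c s = (\<lambda>r. if r = 0 then c else if r \<le> n then (if r = 1 then c + s else c) else 0)"

lemma ca_notin:
  fixes A :: "('n::{finite,linorder}) set"
  assumes "l \<notin> A" "k \<noteq> l"
  shows "coupling_arg ((\<chi> r. c) + s *\<^sub>R axis l 1) k A = Kc (card A) c 0"
proof -
  have "sorted_list_of_set A ! (r - 1) \<noteq> l" if "1 \<le> r" "r \<le> card A" for r
  proof -
    have "r - 1 < length (sorted_list_of_set A)" using that by simp
    hence "sorted_list_of_set A ! (r - 1) \<in> set (sorted_list_of_set A)" by (rule nth_mem)
    thus ?thesis using assms(1) by auto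
  qed
  thus ?thesis using assms(2) by (auto simp: fun_eq_iff coupling_arg_def Kc_def axis_def)
qed

lemma ca_in:
  fixes A :: "('n::{finite,linorder}) set"
  assumes adm: "admissible_coupling (card A + 1) g" and "l \<in> A" "k \<noteq> l"
  shows "g (coupling_arg ((\<chi> r. c) + s *\<^sub>R axis l 1) k A) = g (Kc (card A) c s)"
proof -
  define xs where "xs = sorted_list_of_set A"
  have dist: "distinct xs" and len: "length xs = card A" and st: "set xs = A"
    by (auto simp: xs_def)
  obtain p0 where p0: "p0 < card A" "xs ! p0 = l" using assms(2) st len by (metis in_set_conv_nth)
  define p where "p = Suc p0"
  have p: "1 \<le> p" "p \<le> card A" using p0 by (auto simp: p_def)
  have nth: "xs ! (r - 1) = l \<longleftrightarrow> r = p" if "1 \<le> r" "r \<le> card A" for r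
  proof -
    have "xs ! (r - 1) = xs ! p0 \<longleftrightarrow> r - 1 = p0"
      using dist that p0 len by (intro nth_eq_iff_index_eq) auto
    thus ?thesis using p0 that by (auto simp: p_def)
  qed
  have eq: "coupling_arg ((\<chi> r. c) + s *\<^sub>R axis l 1) k A = Kc (card A) c s \<circ> Transposition.transpose 1 p"
  proof
    fix r
    consider "r = 0" | "1 \<le> r \<and> r \<le> card A" | "r > card A" by linarith
    thus "coupling_arg ((\<chi> r. c) + s *\<^sub>R axis l 1) k A r = (Kc (card A) c s \<circ> Transposition.transpose 1 p) r"
    proof cases
      case 1 thus ?thesis using p assms(3) by (simp add: coupling_arg_def Kc_def axis_def)
    next
      case 2
      have r': "1 \<le> Transposition.transpose 1 p r \<and> Transposition.transpose 1 p r \<le> card A" using 2 p by (auto simp: Transposition.transpose_def)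
      have "Transposition.transpose 1 p r = 1 \<longleftrightarrow> r = p" by (auto simp: Transposition.transpose_def)
      thus ?thesis using 2 r' nth[of r] by (auto simp: coupling_arg_def Kc_def axis_def xs_def[symmetric])
    next
      case 3 thus ?thesis using p by (simp add: coupling_arg_def Kc_def Transposition.transpose_def)
    qed
  qed
  have "Transposition.transpose 1 p permutes {1..<card A + 1}" using p by (intro permutes_swap_id) auto
  thus ?thesis using adm unfolding eq admissible_coupling_def by blast
qed

lemma nf_line:
  fixes E :: "('n::{finite,linorder}) set set"
  assumes adm: "\<forall>A\<in>E. admissible_coupling (card A + 1) (G (card A + 1))" and kl: "k \<noteq> l"
  shows "network_field E F G ((\<chi> r. c) + s *\<^sub>R axis l 1) $ k = F c +
     (\<Sum>A\<in>{A\<in>E. k \<in> A}. if l \<in> A then G (card A + 1) (Kc (card A) c s) else G (card A + 1) (Kc (card A) c 0))"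
  unfolding nf_comp
proof -
  have "((\<chi> r. c) + s *\<^sub>R axis l 1) $ k = c" using kl by (simp add: axis_def)
  moreover have "G (card A + 1) (coupling_arg ((\<chi> r. c) + s *\<^sub>R axis l 1) k A) =
     (if l \<in> A then G (card A + 1) (Kc (card A) c s) else G (card A + 1) (Kc (card A) c 0))" if "A \<in> E" for A
    using ca_in[of A "G (card A + 1)" l k c s] ca_notin[of l A k c s] adm that kl by auto
  ultimately show "F (((\<chi> r. c) + s *\<^sub>R axis l 1) $ k) + (\<Sum>A\<in>{A\<in>E. k \<in> A}. G (card A + 1) (coupling_arg ((\<chi> r. c) + s *\<^sub>R axis l 1) k A)) =
    F c + (\<Sum>A\<in>{A\<in>E. k \<in> A}. if l \<in> A then G (card A + 1) (Kc (card A) c s) else G (card A + 1) (Kc (card A) c 0))"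
    by (auto intro!: sum.cong)
qed

lemma nf_sym:
  fixes E :: "('n::{finite,linorder}) set set"
  assumes adm: "\<forall>A\<in>E. admissible_coupling (card A + 1) (G (card A + 1))" and kl: "k \<noteq> l"
  shows "network_field E F G ((\<chi> r. c) + s *\<^sub>R axis l 1) $ k - network_field E F G ((\<chi> r. c) + 0 *\<^sub>R axis l 1) $ k =
         network_field E F G ((\<chi> r. c) + s *\<^sub>R axis k 1) $ l - network_field E F G ((\<chi> r. c) + 0 *\<^sub>R axis k 1) $ l"
proof -
  define Q where "Q A s = G (card A + 1) (Kc (card A) c s)" for A :: "('n::{finite,linorder}) set" and s
  have fin: "finite {A\<in>E. k \<in> A}" "finite {A\<in>E. l \<in> A}" "finite E" by auto
  have 1: "network_field E F G ((\<chi> r. c) + s *\<^sub>R axis l 1) $ k - network_field E F G ((\<chi> r. c) + 0 *\<^sub>R axis l 1) $ k =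
     (\<Sum>A\<in>{A\<in>E. k \<in> A}. if l \<in> A then Q A s - Q A 0 else 0)"
    unfolding nf_line[OF adm kl] Q_def[symmetric] by (auto simp: sum_subtractf[symmetric] intro!: sum.cong)
  have 2: "network_field E F G ((\<chi> r. c) + s *\<^sub>R axis k 1) $ l - network_field E F G ((\<chi> r. c) + 0 *\<^sub>R axis k 1) $ l =
     (\<Sum>A\<in>{A\<in>E. l \<in> A}. if k \<in> A then Q A s - Q A 0 else 0)"
    using kl unfolding nf_line[OF adm kl[symmetric]] Q_def[symmetric] by (auto simp: sum_subtractf[symmetric] intro!: sum.cong)
  have "(\<Sum>A\<in>{A\<in>E. k \<in> A}. if l \<in> A then Q A s - Q A 0 else 0) = (\<Sum>A\<in>{A\<in>E. k \<in> A \<and> l \<in> A}. Q A s - Q A 0)"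
    using fin by (simp add: sum.inter_filter[symmetric] conj_commute) (rule sum.cong; auto)
  also have "\<dots> = (\<Sum>A\<in>{A\<in>E. l \<in> A}. if k \<in> A then Q A s - Q A 0 else 0)"
    using fin by (simp add: sum.inter_filter[symmetric]) (rule sum.cong; auto)
  finally show ?thesis using 1 2 by simp
qed




lemma dd:
  fixes f :: "real^'n \<Rightarrow> real^'n"
  assumes "(f has_derivative L) (at \<xi>)"
  shows "((\<lambda>s. (f (\<xi> + s *\<^sub>R v) $ k - f \<xi> $ k) / s) \<longlongrightarrow> L v $ k) (at 0)"
proof -
  have lin: "linear L" using assms has_derivative_linear by blast
  have "((\<lambda>s. \<xi> + s *\<^sub>R v) has_derivative (\<lambda>s. s *\<^sub>R v)) (at 0)" by (intro derivative_eq_intros) auto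
  moreover have "(f has_derivative L) (at (\<xi> + 0 *\<^sub>R v))" using assms by simp
  ultimately have "((\<lambda>s. f (\<xi> + s *\<^sub>R v)) has_derivative (\<lambda>s. L (s *\<^sub>R v))) (at 0)"
    using diff_chain_at[of "\<lambda>s. \<xi> + s *\<^sub>R v" "\<lambda>s. s *\<^sub>R v" 0 f L] by (simp add: o_def)
  hence "((\<lambda>s. f (\<xi> + s *\<^sub>R v) $ k) has_derivative (\<lambda>s. L (s *\<^sub>R v) $ k)) (at 0)"
    by (rule bounded_linear.has_derivative[OF bounded_linear_vec_nth])
  moreover have "(\<lambda>s. L (s *\<^sub>R v) $ k) = (*) (L v $ k)"
    using lin by (auto simp: fun_eq_iff linear_scale)
  ultimately have "((\<lambda>s. f (\<xi> + s *\<^sub>R v) $ k) has_field_derivative (L v $ k)) (at 0)"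
    by (simp add: has_field_derivative_def)
  thus ?thesis unfolding has_field_derivative_iff by simp
qed

lemma no_decay_bot:
  fixes w w' :: "real \<Rightarrow> real"
  assumes der: "\<And>t. (w has_real_derivative w' t) (at t)" and nz: "\<And>t. w t \<noteq> 0"
    and lim0: "(w \<longlongrightarrow> 0) at_bot" and limq: "((\<lambda>t. w' t / w t) \<longlongrightarrow> lam) at_bot" and neg: "lam < 0"
  shows False
proof -
  have "eventually (\<lambda>t. w' t / w t < 0) at_bot" using order_tendstoD(2)[OF limq neg] .
  then obtain T where T: "\<And>t. t \<le> T \<Longrightarrow> w' t / w t < 0" unfolding eventually_at_bot_linorder by blast
  have hT: "(w t)\<^sup>2 \<ge> (w T)\<^sup>2" if "t \<le> T" for t
  proof (rule DERIV_nonpos_imp_nonincreasing[OF that])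
    fix x assume "t \<le> x" "x \<le> T"
    hence "w' x / w x < 0" using T by auto
    hence "2 * w x * w' x \<le> 0" by (simp add: divide_less_0_iff mult_le_0_iff mult_less_0_iff) (smt (verit) mult_nonneg_nonpos mult_nonpos_nonneg)
    moreover have "DERIV (\<lambda>t. (w t)\<^sup>2) x :> 2 * w x * w' x"
      using der[of x] by (auto intro!: derivative_eq_intros)
    ultimately show "\<exists>y. DERIV (\<lambda>t. (w t)\<^sup>2) x :> y \<and> y \<le> 0" by blast
  qed
  have pos: "(w T)\<^sup>2 > 0" using nz[of T] by simp
  have "((\<lambda>t. (w t)\<^sup>2) \<longlongrightarrow> 0) at_bot" using tendsto_power[OF lim0, of 2] by simp
  from order_tendstoD(2)[OF this pos] obtain T2 where T2: "\<And>t. t \<le> T2 \<Longrightarrow> (w t)\<^sup>2 < (w T)\<^sup>2"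
    unfolding eventually_at_bot_linorder by blast
  have "(w (min T T2))\<^sup>2 < (w T)\<^sup>2" by (rule T2) simp
  moreover have "(w T)\<^sup>2 \<le> (w (min T T2))\<^sup>2" by (rule hT) simp
  ultimately show False by simp
qed

lemma no_growth_top:
  fixes w w' :: "real \<Rightarrow> real"
  assumes der: "\<And>t. (w has_real_derivative w' t) (at t)" and nz: "\<And>t. w t \<noteq> 0"
    and lim0: "(w \<longlongrightarrow> 0) at_top" and limq: "((\<lambda>t. w' t / w t) \<longlongrightarrow> lam) at_top" and neg: "lam > 0"
  shows False
proof -
  have "eventually (\<lambda>t. w' t / w t > 0) at_top" using order_tendstoD(1)[OF limq neg] .
  then obtain T where T: "\<And>t. t \<ge> T \<Longrightarrow> w' t / w t > 0" unfolding eventually_at_top_linorder by blast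
  have hT: "(w t)\<^sup>2 \<ge> (w T)\<^sup>2" if "T \<le> t" for t
  proof (rule DERIV_nonneg_imp_nondecreasing[OF that])
    fix x assume "T \<le> x" "x \<le> t"
    hence "w' x / w x > 0" using T by auto
    hence "2 * w x * w' x \<ge> 0" by (simp add: zero_less_divide_iff zero_le_mult_iff) (smt (verit))
    moreover have "DERIV (\<lambda>t. (w t)\<^sup>2) x :> 2 * w x * w' x"
      using der[of x] by (auto intro!: derivative_eq_intros)
    ultimately show "\<exists>y. DERIV (\<lambda>t. (w t)\<^sup>2) x :> y \<and> y \<ge> 0" by blast
  qed
  have pos: "(w T)\<^sup>2 > 0" using nz[of T] by simp
  have "((\<lambda>t. (w t)\<^sup>2) \<longlongrightarrow> 0) at_top" using tendsto_power[OF lim0, of 2] by simp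
  from order_tendstoD(2)[OF this pos] obtain T2 where T2: "\<And>t. t \<ge> T2 \<Longrightarrow> (w t)\<^sup>2 < (w T)\<^sup>2"
    unfolding eventually_at_top_linorder by blast
  have "(w (max T T2))\<^sup>2 < (w T)\<^sup>2" by (rule T2) simp
  moreover have "(w T)\<^sup>2 \<le> (w (max T T2))\<^sup>2" by (rule hT) simp
  ultimately show False by simp
qed




lemma traj_limit:
  fixes E :: "('n::{finite,linorder}) set set" and z :: "real \<Rightarrow> real^('n::{finite,linorder})"
    and dF :: "(nat \<Rightarrow> real) \<Rightarrow> real"
  assumes hF: "\<And>z. ((\<lambda>s. F ((z(0:=s)) 0)) has_real_derivative dF z) (at (z 0))"
    and cF: "continuous_on UNIV dF"
    and hG: "\<And>A r z. A \<in> E \<Longrightarrow> r \<le> card A \<Longrightarrow>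
        ((\<lambda>s. G (card A + 1) (z(r:=s))) has_real_derivative dG A r z) (at (z r))"
    and cG: "\<And>A r. A \<in> E \<Longrightarrow> r \<le> card A \<Longrightarrow> continuous_on UNIV (dG A r)"
    and TD: "\<And>p. p \<in> diag \<Longrightarrow> network_field E F G p $ i = network_field E F G p $ m"
    and zS: "\<And>t. z t \<in> S_set i - diag" and mi: "m \<noteq> i"
    and lim: "(z \<longlongrightarrow> \<xi>) Fl" and \<xi>: "\<xi> \<in> diag"
  shows "((\<lambda>t. (network_field E F G (z t) $ i - network_field E F G (z t) $ m) / (z t $ i - z t $ m))
     \<longlongrightarrow> Dn E dF dG i i \<xi> - Dn E dF dG m i \<xi>) Fl"
proof -
  define X where "X t = ((\<chi> r. z t $ m) :: real^('n::{finite,linorder}))" for t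
  define w where "w t = z t $ i - z t $ m" for t
  have zeq: "z t = X t + w t *\<^sub>R axis i 1" for t
  proof -
    have h: "z t $ r = z t $ m" if "r \<noteq> i" for r using zS[of t] that mi unfolding S_set_def by blast
    show ?thesis unfolding vec_eq_iff
    proof
      fix r show "z t $ r = (X t + w t *\<^sub>R axis i 1) $ r"
        using h[of r] by (cases "r = i") (simp_all add: X_def w_def axis_def)
    qed
  qed
  have nz: "w t \<noteq> 0" for t
  proof
    assume "w t = 0"
    hence "z t $ i = z t $ m" by (simp add: w_def)
    moreover have h: "z t $ r = z t $ m" if "r \<noteq> i" for r using zS[of t] that mi unfolding S_set_def by blast
    ultimately have all: "z t $ r = z t $ m" for r using h[of r] by (cases "r = i") simp_all
    have "z t \<in> diag" unfolding diag_def using all by (simp only: mem_Collect_eq) metis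
    thus False using zS[of t] by auto
  qed
  have Xd: "X t \<in> diag" for t by (simp add: X_def diag_def)
  have \<xi>r: "\<xi> $ r = \<xi> $ m" for r using \<xi> by (simp add: diag_def)
  have zm: "((\<lambda>t. z t $ m) \<longlongrightarrow> \<xi> $ m) Fl" by (intro tendsto_vec_nth lim)
  have zi: "((\<lambda>t. z t $ i) \<longlongrightarrow> \<xi> $ i) Fl" by (intro tendsto_vec_nth lim)
  have Xl: "(X \<longlongrightarrow> \<xi>) Fl"
  proof (rule vec_tendstoI)
    fix r show "((\<lambda>t. X t $ r) \<longlongrightarrow> \<xi> $ r) Fl" using zm by (simp add: X_def \<xi>r[of r])
  qed
  have wl: "(w \<longlongrightarrow> 0) Fl" using tendsto_diff[OF zi zm] \<xi>r[of i] by (simp add: w_def[abs_def])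
  have w0: "eventually (\<lambda>t. w t \<noteq> 0) Fl" using nz by simp
  have L1: "((\<lambda>t. (network_field E F G (X t + w t *\<^sub>R axis i 1) $ i - network_field E F G (X t) $ i) / w t)
     \<longlongrightarrow> Dn E dF dG i i \<xi>) Fl"
    by (rule strict_f[where F=F and dF=dF and G=G and dG=dG and E=E, OF hF cF hG cG Xl wl w0])
  have L2: "((\<lambda>t. (network_field E F G (X t + w t *\<^sub>R axis i 1) $ m - network_field E F G (X t) $ m) / w t)
     \<longlongrightarrow> Dn E dF dG m i \<xi>) Fl"
    by (rule strict_f[where F=F and dF=dF and G=G and dG=dG and E=E, OF hF cF hG cG Xl wl w0])
  have eq: "(network_field E F G (z t) $ i - network_field E F G (z t) $ m) / (z t $ i - z t $ m) =
     (network_field E F G (X t + w t *\<^sub>R axis i 1) $ i - network_field E F G (X t) $ i) / w t -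
     (network_field E F G (X t + w t *\<^sub>R axis i 1) $ m - network_field E F G (X t) $ m) / w t" for t
  proof -
    have "network_field E F G (X t) $ i = network_field E F G (X t) $ m" using TD[OF Xd[of t]] .
    moreover have "z t $ i - z t $ m = w t" by (simp add: w_def)
    ultimately show ?thesis unfolding zeq[of t, symmetric] by (simp add: diff_divide_distrib)
  qed
  show ?thesis unfolding eq by (rule tendsto_diff[OF L1 L2])
qed




lemma nz_lemma:
  assumes "z \<in> S_set i - diag" "m \<noteq> i"
  shows "z $ i \<noteq> z $ m"
proof
  assume a: "z $ i = z $ m"
  have h: "z $ r = z $ m" if "r \<noteq> i" for r using assms that unfolding S_set_def by blast
  have all: "z $ r = z $ m" for r using h[of r] a by (cases "r = i") simp_all
  have "z \<in> diag" unfolding diag_def using all by (simp only: mem_Collect_eq) metis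
  thus False using assms by auto
qed

lemma sum_if_one:
  fixes A B :: real
  shows "(\<Sum>q\<in>(UNIV::'n::finite set). if q = i then A else B) = A - B + (\<Sum>q\<in>(UNIV::'n set). B)"
proof -
  have "(\<Sum>q\<in>(UNIV::'n set). if q = i then A else B) = (\<Sum>q\<in>(UNIV::'n set). B + (if q = i then A - B else 0))"
    by (rule sum.cong) auto
  also have "\<dots> = (\<Sum>q\<in>(UNIV::'n set). B) + (A - B)" by (simp add: sum.distrib)
  finally show ?thesis by simp
qed

theorem mainTheorem13:
  fixes E :: "'n::{finite,linorder} set set"
    and F :: "real \<Rightarrow> real"
    and G :: "nat \<Rightarrow> (nat \<Rightarrow> real) \<Rightarrow> real"
  assumes "CARD('n) \<ge> 3"
    and "\<forall>A\<in>E. A \<noteq> {}"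
    and "smooth_real_fun F"
    and "\<forall>A\<in>E. admissible_coupling (card A + 1) (G (card A + 1))"
  shows "\<not> realizes_field_cycle (network_field E F G)"
proof
  let ?f = "network_field E F G"
  assume rc: "realizes_field_cycle ?f"
  obtain dF dG where hF: "\<And>z::nat\<Rightarrow>real. ((\<lambda>s. F ((z(0:=s)) 0)) has_real_derivative dF z) (at (z 0))"
    and cF: "continuous_on UNIV dF"
    and hG: "\<And>A r z. A \<in> E \<Longrightarrow> r \<le> card A \<Longrightarrow> ((\<lambda>s. G (card A + 1) (z(r:=s))) has_real_derivative dG A r z) (at (z r))"
    and cG: "\<And>A r. A \<in> E \<Longrightarrow> r \<le> card A \<Longrightarrow> continuous_on UNIV (dG A r)"
    using get_derivs[OF assms(3) assms(4)] by blast
  have lipall: "\<And>X0. \<exists>\<rho>>0. \<exists>K\<ge>0. \<forall>X\<in>cball X0 \<rho>. \<forall>Y\<in>cball X0 \<rho>. norm (?f X - ?f Y) \<le> K * norm (X - Y)"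
    using f_lip[OF assms(3) assms(4)] by blast
  have cont: "continuous_on UNIV ?f" by (rule cont_from_lip[OF lipall])
  have tan: "?f p $ k = ?f p $ l"
    if inv: "dyn_invariant ?f {x. \<forall>(k,l)\<in>R. x $ k = x $ l}" and p: "\<forall>(k,l)\<in>R. p $ k = p $ l" and kl: "(k,l) \<in> R"
    for R p k l
  proof -
    obtain \<rho> K where "\<rho> > 0" "K \<ge> 0" "\<forall>X\<in>cball p \<rho>. \<forall>Y\<in>cball p \<rho>. norm (?f X - ?f Y) \<le> K * norm (X - Y)"
      using lipall[of p] by blast
    thus ?thesis using tangent[OF inv cont _ _ _ p kl] by blast
  qed
  have diag_eq: "(diag :: (real^('n::{finite,linorder})) set) = {x. \<forall>(k,l)\<in>UNIV. x $ k = x $ l}" by (auto simp: diag_def)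
  have S_eq: "(S_set j' :: (real^('n::{finite,linorder})) set) = {x. \<forall>(k,l)\<in>{(k,l). k \<noteq> j' \<and> l \<noteq> j'}. x $ k = x $ l}" for j'
    by (auto simp: S_set_def)
  from rc obtain i j \<xi>1 \<xi>2 x y where ij: "i \<noteq> j" and invD: "dyn_invariant ?f diag"
    and invi: "dyn_invariant ?f (S_set i)" and invj: "dyn_invariant ?f (S_set j)"
    and \<xi>1: "\<xi>1 \<in> diag" and hyp: "hyperbolic_equilibrium ?f \<xi>1"
    and hx: "heteroclinic ?f \<xi>1 \<xi>2 x" and xS: "\<And>t. x t \<in> S_set i - diag"
    and hy: "heteroclinic ?f \<xi>2 \<xi>1 y" and yS: "\<And>t. y t \<in> S_set j - diag"
    unfolding realizes_field_cycle_def by blast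
  obtain m where mi: "m \<noteq> i" and mj: "m \<noteq> j"
  proof -
    have "\<not> (UNIV::'n set) \<subseteq> {i, j}"
    proof
      assume "(UNIV::'n set) \<subseteq> {i, j}"
      hence "CARD('n) \<le> card {i, j}" by (intro card_mono) auto
      also have "\<dots> \<le> 2" by (rule order_trans[OF card_insert_le_m1]) auto
      finally show False using assms(1) by simp
    qed
    thus ?thesis using that by blast
  qed
  have TD: "?f p $ k = ?f p $ l" if "p \<in> diag" for p k l
  proof -
    have inv': "dyn_invariant ?f {x. \<forall>(k,l)\<in>UNIV. x $ k = x $ l}" using invD unfolding diag_eq .
    have pd: "\<forall>(k,l)\<in>UNIV. p $ k = p $ l" using that unfolding diag_def by blast
    show ?thesis by (rule tan[OF inv' pd]) simp
  qed
  have TS: "?f p $ k = ?f p $ l" if "dyn_invariant ?f (S_set j')" "p \<in> S_set j'" "k \<noteq> j'" "l \<noteq> j'" for j' p k l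
  proof -
    have inv': "dyn_invariant ?f {x. \<forall>(k,l)\<in>{(k,l). k \<noteq> j' \<and> l \<noteq> j'}. x $ k = x $ l}" using that(1) unfolding S_eq .
    have pd: "\<forall>(k,l)\<in>{(k,l). k \<noteq> j' \<and> l \<noteq> j'}. p $ k = p $ l" using that(2) unfolding S_set_def by blast
    show ?thesis by (rule tan[OF inv' pd]) (use that in simp)
  qed
  from hyp obtain L where f0: "?f \<xi>1 = 0" and dL: "(?f has_derivative L) (at \<xi>1)"
    and eig: "\<forall>c. is_eigenvalue (complexify (matrix L)) c \<longrightarrow> Re c \<noteq> 0"
    unfolding hyperbolic_equilibrium_def by blast
  have lin: "linear L" using dL has_derivative_linear by blast
  define a where "a = \<xi>1 $ m"
  have \<xi>c: "\<xi>1 = (\<chi> r. a)" using \<xi>1 by (auto simp: vec_eq_iff diag_def a_def)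
  define Jm where "Jm k q = L (axis q 1) $ k" for k q
  have nb: "at (0::real) \<noteq> bot" by simp
  have DnJ: "Dn E dF dG k q \<xi>1 = Jm k q" for k q
  proof -
    have "((\<lambda>s. (?f (\<xi>1 + s *\<^sub>R axis q 1) $ k - ?f \<xi>1 $ k) / s) \<longlongrightarrow> Dn E dF dG k q \<xi>1) (at 0)"
      using strict_f[where F=F and dF=dF and G=G and dG=dG and E=E and X="\<lambda>s. \<xi>1" and w="\<lambda>s. s" and Fl="at 0",
          OF hF cF hG cG tendsto_const tendsto_ident_at] by (simp add: eventually_at_filter)
    moreover have "((\<lambda>s. (?f (\<xi>1 + s *\<^sub>R axis q 1) $ k - ?f \<xi>1 $ k) / s) \<longlongrightarrow> Jm k q) (at 0)"
      unfolding Jm_def by (rule dd[OF dL])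
    ultimately show ?thesis using tendsto_unique[OF nb] by blast
  qed
  have F1: "Jm k l = Jm l k" if kl: "k \<noteq> l" for k l
  proof -
    have eqf: "(\<lambda>s. (?f (\<xi>1 + s *\<^sub>R axis l 1) $ k - ?f \<xi>1 $ k) / s) = (\<lambda>s. (?f (\<xi>1 + s *\<^sub>R axis k 1) $ l - ?f \<xi>1 $ l) / s)"
    proof
      fix s show "(?f (\<xi>1 + s *\<^sub>R axis l 1) $ k - ?f \<xi>1 $ k) / s = (?f (\<xi>1 + s *\<^sub>R axis k 1) $ l - ?f \<xi>1 $ l) / s"
        using nf_sym[OF assms(4) kl, of F a s] unfolding \<xi>c by simp
    qed
    have "((\<lambda>s. (?f (\<xi>1 + s *\<^sub>R axis l 1) $ k - ?f \<xi>1 $ k) / s) \<longlongrightarrow> Jm k l) (at 0)"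
      unfolding Jm_def by (rule dd[OF dL])
    moreover have "((\<lambda>s. (?f (\<xi>1 + s *\<^sub>R axis l 1) $ k - ?f \<xi>1 $ k) / s) \<longlongrightarrow> Jm l k) (at 0)"
      unfolding eqf Jm_def by (rule dd[OF dL])
    ultimately show ?thesis using tendsto_unique[OF nb] by blast
  qed
  define ones :: "real^('n::{finite,linorder})" where "ones = (\<chi> r. 1)"
  have F2: "L ones $ k = L ones $ m" for k
  proof -
    have eqf: "(\<lambda>s. (?f (\<xi>1 + s *\<^sub>R ones) $ k - ?f \<xi>1 $ k) / s) = (\<lambda>s. (?f (\<xi>1 + s *\<^sub>R ones) $ m - ?f \<xi>1 $ m) / s)"
    proof
      fix s
      have "\<xi>1 + s *\<^sub>R ones \<in> diag" unfolding \<xi>c ones_def by (simp add: diag_def)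
      thus "(?f (\<xi>1 + s *\<^sub>R ones) $ k - ?f \<xi>1 $ k) / s = (?f (\<xi>1 + s *\<^sub>R ones) $ m - ?f \<xi>1 $ m) / s"
        using TD f0 by (metis zero_index)
    qed
    have "((\<lambda>s. (?f (\<xi>1 + s *\<^sub>R ones) $ k - ?f \<xi>1 $ k) / s) \<longlongrightarrow> L ones $ k) (at 0)"
      by (rule dd[OF dL])
    moreover have "((\<lambda>s. (?f (\<xi>1 + s *\<^sub>R ones) $ k - ?f \<xi>1 $ k) / s) \<longlongrightarrow> L ones $ m) (at 0)"
      unfolding eqf by (rule dd[OF dL])
    ultimately show ?thesis using tendsto_unique[OF nb] by blast
  qed
  have F34: "Jm k q = Jm m q" if inv: "dyn_invariant ?f (S_set q)" and kq: "k \<noteq> q" and mq: "m \<noteq> q" for k q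
  proof -
    have eqf: "(\<lambda>s. (?f (\<xi>1 + s *\<^sub>R axis q 1) $ k - ?f \<xi>1 $ k) / s) = (\<lambda>s. (?f (\<xi>1 + s *\<^sub>R axis q 1) $ m - ?f \<xi>1 $ m) / s)"
    proof
      fix s
      have "\<xi>1 + s *\<^sub>R axis q 1 \<in> S_set q" unfolding \<xi>c by (simp add: S_set_def axis_def)
      hence "?f (\<xi>1 + s *\<^sub>R axis q 1) $ k = ?f (\<xi>1 + s *\<^sub>R axis q 1) $ m" using TS[OF inv _ kq mq] by blast
      thus "(?f (\<xi>1 + s *\<^sub>R axis q 1) $ k - ?f \<xi>1 $ k) / s = (?f (\<xi>1 + s *\<^sub>R axis q 1) $ m - ?f \<xi>1 $ m) / s"
        using f0 by simp
    qed
    have "((\<lambda>s. (?f (\<xi>1 + s *\<^sub>R axis q 1) $ k - ?f \<xi>1 $ k) / s) \<longlongrightarrow> Jm k q) (at 0)"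
      unfolding Jm_def by (rule dd[OF dL])
    moreover have "((\<lambda>s. (?f (\<xi>1 + s *\<^sub>R axis q 1) $ k - ?f \<xi>1 $ k) / s) \<longlongrightarrow> Jm m q) (at 0)"
      unfolding eqf Jm_def by (rule dd[OF dL])
    ultimately show ?thesis using tendsto_unique[OF nb] by blast
  qed
  have F5: "L ones $ k = (\<Sum>q\<in>UNIV. Jm k q)" for k
  proof -
    have "ones = (\<Sum>q\<in>UNIV. axis q 1)" by (simp add: vec_eq_iff ones_def axis_def)
    hence "L ones = (\<Sum>q\<in>UNIV. L (axis q 1))" using linear_sum[OF lin] by simp
    thus ?thesis by (simp add: Jm_def)
  qed
  have rowi: "Jm i q = Jm m i" if "q \<noteq> i" for q using F1[of i q] F34[OF invi, of q] that mi by auto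
  have rowj: "Jm j q = Jm m j" if "q \<noteq> j" for q using F1[of j q] F34[OF invj, of q] that mj by auto
  have mumu: "Jm m i = Jm m j" using rowi[of j] rowj[of i] F1[OF ij] ij by auto
  have lamEq: "Jm i i - Jm m i = Jm j j - Jm m j"
  proof -
    have "(\<Sum>q\<in>UNIV. Jm i q) = (\<Sum>q\<in>UNIV. if q = i then Jm i i else Jm m i)" by (rule sum.cong) (auto simp: rowi)
    also have "\<dots> = Jm i i - Jm m i + (\<Sum>q\<in>(UNIV::'n set). Jm m i)" by (rule sum_if_one)
    finally have si: "(\<Sum>q\<in>UNIV. Jm i q) = Jm i i - Jm m i + (\<Sum>q\<in>(UNIV::'n set). Jm m i)" .
    have "(\<Sum>q\<in>UNIV. Jm j q) = (\<Sum>q\<in>UNIV. if q = j then Jm j j else Jm m j)" by (rule sum.cong) (auto simp: rowj)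
    also have "\<dots> = Jm j j - Jm m j + (\<Sum>q\<in>(UNIV::'n set). Jm m j)" by (rule sum_if_one)
    finally have sj: "(\<Sum>q\<in>UNIV. Jm j q) = Jm j j - Jm m j + (\<Sum>q\<in>(UNIV::'n set). Jm m j)" .
    have "(\<Sum>q\<in>UNIV. Jm i q) = (\<Sum>q\<in>UNIV. Jm j q)" using F5[of i] F5[of j] F2[of i] F2[of j] by simp
    thus ?thesis using si sj mumu by simp
  qed
  have compder: "((\<lambda>t. z t $ k - z t $ l) has_real_derivative (?f (z t) $ k - ?f (z t) $ l)) (at t)"
    if "(z has_vector_derivative ?f (z t)) (at t)" for z :: "real \<Rightarrow> real^('n::{finite,linorder})" and t k l
  proof -
    have "((\<lambda>t. z t $ k - z t $ l) has_vector_derivative (?f (z t) $ k - ?f (z t) $ l)) (at t)"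
      using that by (intro has_vector_derivative_diff bounded_linear.has_vector_derivative[OF bounded_linear_vec_nth])
    thus ?thesis by (simp add: has_real_derivative_iff_has_vector_derivative)
  qed
  have TDi: "\<And>p. p \<in> diag \<Longrightarrow> ?f p $ i = ?f p $ m" using TD by blast
  have TDj: "\<And>p. p \<in> diag \<Longrightarrow> ?f p $ j = ?f p $ m" using TD by blast
  have \<xi>r: "\<xi>1 $ r = a" for r by (simp add: \<xi>c)
  have signi: "\<not> (Jm i i - Jm m i < 0)"
  proof
    assume neg: "Jm i i - Jm m i < 0"
    have xl: "(x \<longlongrightarrow> \<xi>1) at_bot" using hx by (simp add: heteroclinic_def)
    have lq: "((\<lambda>t. (?f (x t) $ i - ?f (x t) $ m) / (x t $ i - x t $ m)) \<longlongrightarrow> Jm i i - Jm m i) at_bot"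
      using traj_limit[where F=F and dF=dF and G=G and dG=dG and E=E, OF hF cF hG cG TDi xS mi xl \<xi>1] by (simp add: DnJ)
    have w0: "((\<lambda>t. x t $ i - x t $ m) \<longlongrightarrow> 0) at_bot"
      using tendsto_diff[OF tendsto_vec_nth[OF xl, of i] tendsto_vec_nth[OF xl, of m]] by (simp add: \<xi>r)
    show False
      by (rule no_decay_bot[OF compder _ w0 lq neg]) (use hx nz_lemma[OF xS mi] in \<open>auto simp: heteroclinic_def\<close>)
  qed
  have signj: "\<not> (Jm j j - Jm m j > 0)"
  proof
    assume pos: "Jm j j - Jm m j > 0"
    have yl: "(y \<longlongrightarrow> \<xi>1) at_top" using hy by (simp add: heteroclinic_def)
    have lq: "((\<lambda>t. (?f (y t) $ j - ?f (y t) $ m) / (y t $ j - y t $ m)) \<longlongrightarrow> Jm j j - Jm m j) at_top"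
      using traj_limit[where F=F and dF=dF and G=G and dG=dG and E=E, OF hF cF hG cG TDj yS mj yl \<xi>1] by (simp add: DnJ)
    have w0: "((\<lambda>t. y t $ j - y t $ m) \<longlongrightarrow> 0) at_top"
      using tendsto_diff[OF tendsto_vec_nth[OF yl, of j] tendsto_vec_nth[OF yl, of m]] by (simp add: \<xi>r)
    show False
      by (rule no_growth_top[OF compder _ w0 lq pos]) (use hy nz_lemma[OF yS mj] in \<open>auto simp: heteroclinic_def\<close>)
  qed
  have lam0: "Jm i i = Jm m i" using signi signj lamEq by linarith
  have Lei: "L (axis i 1) = Jm m i *\<^sub>R ones"
  proof (unfold vec_eq_iff, intro allI)
    fix k show "L (axis i 1) $ k = (Jm m i *\<^sub>R ones) $ k"
    proof (cases "k = i")
      case True thus ?thesis using lam0 by (simp add: Jm_def ones_def)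
    next
      case False thus ?thesis using F34[OF invi False mi] by (simp add: Jm_def ones_def)
    qed
  qed
  define \<kappa> where "\<kappa> = L ones $ m"
  have Lones: "L ones = \<kappa> *\<^sub>R ones" using F2 by (simp add: vec_eq_iff ones_def \<kappa>_def)
  define v where "v = (if \<kappa> = 0 then ones else axis i 1 - (Jm m i / \<kappa>) *\<^sub>R ones)"
  have Lv: "L v = 0"
  proof (cases "\<kappa> = 0")
    case True thus ?thesis using Lones by (simp add: v_def)
  next
    case False
    have "L v = L (axis i 1) - (Jm m i / \<kappa>) *\<^sub>R L ones"
      using False by (simp add: v_def linear_diff[OF lin] linear_scale[OF lin])
    thus ?thesis using False by (simp add: Lei Lones)
  qed
  have vnz: "v \<noteq> 0"
  proof (cases "\<kappa> = 0")
    case True thus ?thesis by (simp add: v_def ones_def vec_eq_iff)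
  next
    case False
    have "v $ i - v $ m = 1" using False mi by (simp add: v_def ones_def axis_def)
    thus ?thesis by auto
  qed
  define cv :: "complex^('n::{finite,linorder})" where "cv = (\<chi> k. complex_of_real (v $ k))"
  have cvnz: "cv \<noteq> 0"
  proof
    assume "cv = 0"
    hence "v $ k = 0" for k by (simp add: cv_def vec_eq_iff)
    thus False using vnz by (simp add: vec_eq_iff)
  qed
  have "complexify (matrix L) *v cv = 0"
  proof (unfold vec_eq_iff, intro allI)
    fix k
    have "(complexify (matrix L) *v cv) $ k = complex_of_real ((matrix L *v v) $ k)"
      by (simp add: complexify_def cv_def matrix_vector_mult_def)
    also have "\<dots> = 0" using matrix_works[OF lin[folded linear_matrix_vector_mul_eq], of v] Lv by simp
    finally show "(complexify (matrix L) *v cv) $ k = 0 $ k" by simp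
  qed
  hence "is_eigenvalue (complexify (matrix L)) 0" unfolding is_eigenvalue_def using cvnz by auto
  thus False using eig by auto
qed


end
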